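(* Let $p$ be a prime and $G$ a finite group with $p\nmid |G|$. If $G$ acts by isometries on a nondegenerate lattice $L$ with $p\nmid\det(L)$, then $p\nmid \det(L^G)\det(L_G)$.
   Context: $L^G=\{l\in L: g(l)=l\ \forall g\in G\}$ is the invariant sublattice and $L_G=(L^G)^\perp\subset L$ the coinvariant sublattice. *)

theory Defs
  imports "HOL-Algebra.Group" "Jordan_Normal_Form.Determinant"
begin

text \<open>A lattice of rank n is modelled as Z^n (integer vectors of dimension n) with an
  integer symmetric Gram matrix B. Sublattices are sets of integer vectors.\<close>

definition is_lattice_basis :: "nat \<Rightarrow> int vec set \<Rightarrow> int mat \<Rightarrow> bool" where
  "is_lattice_basis n M V \<longleftrightarrow>
     dim_row V = n \<and>
     (\<forall>c \<in> carrier_vec (dim_col V). V *\<^sub>v c = 0\<^sub>v n \<longrightarrow> c = 0\<^sub>v (dim_col V)) \<and>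
     M = {V *\<^sub>v c | c. c \<in> carrier_vec (dim_col V)}"

definition lattice_det :: "int mat \<Rightarrow> int vec set \<Rightarrow> int" where
  "lattice_det B M =
     (let V = (SOME V. is_lattice_basis (dim_row B) M V) in det (transpose_mat V * B * V))"

definition invariant_sublattice :: "nat \<Rightarrow> ('g, 'b) monoid_scheme \<Rightarrow> ('g \<Rightarrow> int mat) \<Rightarrow> int vec set" where
  "invariant_sublattice n G \<rho> = {v \<in> carrier_vec n. \<forall>g \<in> carrier G. \<rho> g *\<^sub>v v = v}"

definition orth_complement :: "int mat \<Rightarrow> int vec set \<Rightarrow> int vec set" where
  "orth_complement B M = {v \<in> carrier_vec (dim_row B). \<forall>w \<in> M. v \<bullet> (B *\<^sub>v w) = 0}"

definition coinvariant_sublattice :: "int mat \<Rightarrow> ('g, 'b) monoid_scheme \<Rightarrow> ('g \<Rightarrow> int mat) \<Rightarrow> int vec set" where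
  "coinvariant_sublattice B G \<rho> = orth_complement B (invariant_sublattice (dim_row B) G \<rho>)"

end

theory Submission
  imports Defs
begin



definition zsub :: "nat \<Rightarrow> int vec set \<Rightarrow> bool" where
  "zsub n M \<longleftrightarrow> M \<subseteq> carrier_vec n \<and> 0\<^sub>v n \<in> M \<and> (\<forall>x\<in>M. \<forall>y\<in>M. x + y \<in> M)
     \<and> (\<forall>x\<in>M. \<forall>c. c \<cdot>\<^sub>v x \<in> M)"

lemma ext_col_mult:
  fixes V :: "int mat"
  assumes V: "V \<in> carrier_mat n r" and m: "m \<in> carrier_vec n" and c: "c \<in> carrier_vec (Suc r)"
  shows "mat n (Suc r) (\<lambda>(i,j). if j < r then V $$ (i,j) else m $ i) *\<^sub>v c
        = V *\<^sub>v vec r (\<lambda>j. c $ j) + c $ r \<cdot>\<^sub>v m"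
proof (rule eq_vecI)
  fix i assume "i < dim_vec (V *\<^sub>v vec r (\<lambda>j. c $ j) + c $ r \<cdot>\<^sub>v m)"
  then have i: "i < n" using V m by simp
  show "(mat n (Suc r) (\<lambda>(i,j). if j < r then V $$ (i,j) else m $ i) *\<^sub>v c) $ i
      = (V *\<^sub>v vec r (\<lambda>j. c $ j) + c $ r \<cdot>\<^sub>v m) $ i"
    using i V m c by (simp add: scalar_prod_def row_def sum.atLeast0_lessThan_Suc mult.commute)
qed (use V m c in simp)

lemma zero_basis: "is_lattice_basis n {0\<^sub>v n} (0\<^sub>m n 0 :: int mat)"
    unfolding is_lattice_basis_def
  proof (intro conjI ballI impI)
    have F1: "\<And>c::int vec. c \<in> carrier_vec 0 \<Longrightarrow> 0\<^sub>m n 0 *\<^sub>v c = 0\<^sub>v n"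
        by (rule eq_vecI) (auto simp: scalar_prod_def)
    have F2: "(0\<^sub>v 0 :: int vec) \<in> carrier_vec 0" by simp
    have F3: "dim_col (0\<^sub>m n 0 :: int mat) = 0" by simp
    have E: "{0\<^sub>m n 0 *\<^sub>v c |c. c \<in> carrier_vec 0} = {0\<^sub>v n :: int vec}"
    proof (intro equalityI subsetI)
      fix x :: "int vec" assume "x \<in> {0\<^sub>m n 0 *\<^sub>v c |c. c \<in> carrier_vec 0}"
      then obtain c :: "int vec" where "c \<in> carrier_vec 0" "x = 0\<^sub>m n 0 *\<^sub>v c" by blast
      then show "x \<in> {0\<^sub>v n}" using F1 by simp
    next
      fix x assume "x \<in> {0\<^sub>v n :: int vec}"
      then have x: "x = 0\<^sub>v n" by simp
      show "x \<in> {0\<^sub>m n 0 *\<^sub>v c |c. c \<in> carrier_vec 0}"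
        by (rule CollectI, rule exI[of _ "0\<^sub>v 0"]) (simp add: x F1 F2)
    qed
    show "{0\<^sub>v n :: int vec} = {0\<^sub>m n 0 *\<^sub>v c |c. c \<in> carrier_vec (dim_col (0\<^sub>m n 0 :: int mat))}"
      unfolding F3 by (rule sym[OF E])
  qed (auto intro!: eq_vecI)

lemma basis_aux:
  assumes "k \<le> n" "zsub n M" "\<forall>v\<in>M. \<forall>i. k \<le> i \<and> i < n \<longrightarrow> v $ i = 0"
  shows "\<exists>V. is_lattice_basis n M V"
  using assms
proof (induction k arbitrary: M)
  case 0
  have "M = {0\<^sub>v n}"
  proof
    show "M \<subseteq> {0\<^sub>v n}"
    proof
      fix v assume "v \<in> M"
      then have "v \<in> carrier_vec n" using 0 unfolding zsub_def by auto
      then show "v \<in> {0\<^sub>v n}" using 0 \<open>v \<in> M\<close> by (auto intro!: eq_vecI)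
    qed
  qed (use 0 in \<open>auto simp: zsub_def\<close>)
  moreover have "is_lattice_basis n {0\<^sub>v n} (0\<^sub>m n 0 :: int mat)" by (rule zero_basis)
  ultimately show ?case by auto
next
  case (Suc k)
  define M' where "M' = {v\<in>M. v $ k = 0}"
  have zM: "M \<subseteq> carrier_vec n" "0\<^sub>v n \<in> M" "\<And>x y. x\<in>M \<Longrightarrow> y\<in>M \<Longrightarrow> x + y \<in> M"
      "\<And>x c. x\<in>M \<Longrightarrow> c \<cdot>\<^sub>v x \<in> M" using Suc.prems unfolding zsub_def by auto
  have kn: "k < n" using Suc.prems by simp
  have "zsub n M'" unfolding zsub_def M'_def using zM kn by auto
  moreover have "\<forall>v\<in>M'. \<forall>i. k \<le> i \<and> i < n \<longrightarrow> v $ i = 0"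
  proof (intro ballI allI impI)
    fix v i assume "v \<in> M'" "k \<le> i \<and> i < n"
    then show "v $ i = 0" using Suc.prems(3) unfolding M'_def by (cases "i = k") auto
  qed
  ultimately have "\<exists>V. is_lattice_basis n M' V" using Suc.IH kn by simp
  then obtain V where V: "is_lattice_basis n M' V" by blast
  define r where "r = dim_col V"
  have Vc: "V \<in> carrier_mat n r" using V unfolding r_def is_lattice_basis_def by auto
  have Vinj: "\<And>c. c \<in> carrier_vec r \<Longrightarrow> V *\<^sub>v c = 0\<^sub>v n \<Longrightarrow> c = 0\<^sub>v r"
    using V unfolding r_def is_lattice_basis_def by auto
  have VM: "M' = {V *\<^sub>v c | c. c \<in> carrier_vec r}"
    using V unfolding r_def is_lattice_basis_def by auto
  show ?case
  proof (cases "\<forall>v\<in>M. v $ k = 0")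
    case True
    then have "M' = M" unfolding M'_def by auto
    then show ?thesis using V by auto
  next
    case False
    then obtain v0 where v0: "v0 \<in> M" "v0 $ k \<noteq> 0" by auto
    have "\<exists>v\<in>M. v $ k > 0"
    proof (cases "v0 $ k > 0")
      case False
      then have "((-1) \<cdot>\<^sub>v v0) $ k > 0" using v0 zM(1) kn by auto
      then show ?thesis using zM(4)[OF v0(1)] by blast
    qed (use v0 in auto)
    then have ex: "\<exists>d::nat. d > 0 \<and> (\<exists>v\<in>M. v $ k = int d)"
      by (metis zero_less_imp_eq_int)
    define d where "d = (LEAST d::nat. d > 0 \<and> (\<exists>v\<in>M. v $ k = int d))"
    have d: "d > 0 \<and> (\<exists>v\<in>M. v $ k = int d)" unfolding d_def by (rule LeastI_ex[OF ex])
    have dmin: "\<And>e::nat. e > 0 \<Longrightarrow> (\<exists>v\<in>M. v $ k = int e) \<Longrightarrow> d \<le> e"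
      unfolding d_def by (rule Least_le) auto
    obtain m where m: "m \<in> M" "m $ k = int d" using d by auto
    have mc: "m \<in> carrier_vec n" using m zM by auto
    have dec: "v + (- (v $ k div int d)) \<cdot>\<^sub>v m \<in> M'" if vM: "v \<in> M" for v
    proof -
      let ?u = "v + (- (v $ k div int d)) \<cdot>\<^sub>v m"
      have uM: "?u \<in> M" using zM vM m by auto
      have vc: "v \<in> carrier_vec n" using vM zM by auto
      have "?u $ k = v $ k - (v $ k div int d) * int d" using vc mc kn m by simp
      also have "\<dots> = v $ k mod int d" by (simp add: minus_div_mult_eq_mod)
      finally have uk: "?u $ k = v $ k mod int d" .
      have "v $ k mod int d = 0"
      proof (rule ccontr)
        assume ne: "v $ k mod int d \<noteq> 0"
        have pos: "v $ k mod int d > 0" using ne d by (simp add: order_le_neq_trans)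
        have "d \<le> nat (v $ k mod int d)"
          by (rule dmin) (use pos uk uM in auto)
        moreover have "v $ k mod int d < int d" using d by simp
        ultimately show False using pos by linarith
      qed
      then show ?thesis unfolding M'_def using uM uk by simp
    qed
    define W where "W = mat n (Suc r) (\<lambda>(i,j). if j < r then V $$ (i,j) else m $ i)"
    have Wc: "W \<in> carrier_mat n (Suc r)" unfolding W_def by simp
    have Wmult: "\<And>c. c \<in> carrier_vec (Suc r) \<Longrightarrow> W *\<^sub>v c = V *\<^sub>v vec r (\<lambda>j. c $ j) + c $ r \<cdot>\<^sub>v m"
      unfolding W_def by (rule ext_col_mult[OF Vc mc])
    have "is_lattice_basis n M W"
      unfolding is_lattice_basis_def
    proof (intro conjI ballI impI)
      show "dim_row W = n" using Wc by simp
    next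
      fix c assume c: "c \<in> carrier_vec (dim_col W)" and z: "W *\<^sub>v c = 0\<^sub>v n"
      have c': "c \<in> carrier_vec (Suc r)" using c Wc by simp
      let ?c0 = "vec r (\<lambda>j. c $ j) :: int vec"
      have c0: "?c0 \<in> carrier_vec r" by simp
      have "V *\<^sub>v ?c0 \<in> M'" using VM c0 by auto
      then have k0: "(V *\<^sub>v ?c0) $ k = 0" unfolding M'_def by simp
      have "(W *\<^sub>v c) $ k = 0" using z kn by simp
      then have "(V *\<^sub>v ?c0) $ k + c $ r * m $ k = 0" using Wmult[OF c'] kn Vc mc by simp
      then have cr: "c $ r = 0" using k0 m d by simp
      have zm: "0 \<cdot>\<^sub>v m = 0\<^sub>v n" using mc by (intro eq_vecI) auto
      have "V *\<^sub>v ?c0 \<in> carrier_vec n" using Vc by simp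
      then have "V *\<^sub>v ?c0 = 0\<^sub>v n" using z Wmult[OF c'] cr zm by simp
      then have "?c0 = 0\<^sub>v r" using Vinj c0 by blast
      then show "c = 0\<^sub>v (dim_col W)"
        using cr c' Wc by (auto intro!: eq_vecI simp: vec_eq_iff less_Suc_eq)
    next
      show "M = {W *\<^sub>v c |c. c \<in> carrier_vec (dim_col W)}"
      proof (intro equalityI subsetI)
        fix v assume vM: "v \<in> M"
        let ?q = "v $ k div int d"
        have "v + (- ?q) \<cdot>\<^sub>v m \<in> M'" by (rule dec[OF vM])
        then obtain c where c: "c \<in> carrier_vec r" "v + (- ?q) \<cdot>\<^sub>v m = V *\<^sub>v c"
          using VM by auto
        define c' where "c' = vec (Suc r) (\<lambda>j. if j < r then c $ j else ?q)"
        have c'c: "c' \<in> carrier_vec (Suc r)" unfolding c'_def by simp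
        have "vec r (\<lambda>j. c' $ j) = c" using c unfolding c'_def by (auto intro!: eq_vecI)
        then have "W *\<^sub>v c' = V *\<^sub>v c + ?q \<cdot>\<^sub>v m" using Wmult[OF c'c] unfolding c'_def by simp
        also have "\<dots> = v"
        proof -
          have vc: "v \<in> carrier_vec n" using vM zM by auto
          show ?thesis unfolding c(2)[symmetric] using vc mc by (intro eq_vecI) auto
        qed
        finally show "v \<in> {W *\<^sub>v c |c. c \<in> carrier_vec (dim_col W)}" using c'c Wc by force
      next
        fix v assume "v \<in> {W *\<^sub>v c |c. c \<in> carrier_vec (dim_col W)}"
        then obtain c where c: "c \<in> carrier_vec (Suc r)" "v = W *\<^sub>v c" using Wc by auto
        have "V *\<^sub>v vec r (\<lambda>j. c $ j) \<in> M'" unfolding VM by (intro CollectI exI[of _ "vec r (\<lambda>j. c $ j)"]) simp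
        then have "V *\<^sub>v vec r (\<lambda>j. c $ j) \<in> M" unfolding M'_def by simp
        then show "v \<in> M" using c Wmult zM m by auto
      qed
    qed
    then show ?thesis by auto
  qed
qed

lemma basis_exists: "zsub n M \<Longrightarrow> \<exists>V. is_lattice_basis n M V"
  by (rule basis_aux[of n n]) auto




lemma mat_vec_smult_int:
  fixes A :: "int mat"
  assumes "A \<in> carrier_mat nr nc" "v \<in> carrier_vec nc"
  shows "A *\<^sub>v (c \<cdot>\<^sub>v v) = c \<cdot>\<^sub>v (A *\<^sub>v v)"
  using assms by (intro eq_vecI) auto

lemma smult_mat_vec_int:
  fixes A :: "int mat"
  assumes "A \<in> carrier_mat nr nc" "v \<in> carrier_vec nc"
  shows "(c \<cdot>\<^sub>m A) *\<^sub>v v = c \<cdot>\<^sub>v (A *\<^sub>v v)"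
  using assms by (intro eq_vecI) (auto simp: row_def scalar_prod_def sum_distrib_left ac_simps)

lemma col_as_mult:
  fixes X :: "int mat"
  assumes "X \<in> carrier_mat nr n" "k < n"
  shows "col X k = X *\<^sub>v unit_vec n k"
proof -
  have "col X k = col (X * 1\<^sub>m n) k" using assms by simp
  also have "\<dots> = X *\<^sub>v col (1\<^sub>m n) k" using assms by (intro col_mult2) auto
  finally show ?thesis using assms by simp
qed

lemma key_det:
  fixes B V X :: "int mat" and N :: int
  assumes Bc: "B \<in> carrier_mat n n"
    and V: "is_lattice_basis n M V"
    and Xc: "X \<in> carrier_mat n n"
    and XM: "\<And>x. x \<in> carrier_vec n \<Longrightarrow> X *\<^sub>v x \<in> M"
    and XN: "\<And>v. v \<in> M \<Longrightarrow> X *\<^sub>v v = N \<cdot>\<^sub>v v"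
    and BX: "B * X = transpose_mat X * B"
  shows "det (transpose_mat V * B * V) dvd N ^ dim_col V * (det B ^ dim_col V * N ^ dim_col V)"
proof -
  define r where "r = dim_col V"
  have Vc: "V \<in> carrier_mat n r" using V unfolding r_def is_lattice_basis_def by auto
  have Vinj: "\<And>c. c \<in> carrier_vec r \<Longrightarrow> V *\<^sub>v c = 0\<^sub>v n \<Longrightarrow> c = 0\<^sub>v r"
    using V unfolding r_def is_lattice_basis_def by auto
  have VM: "M = {V *\<^sub>v c | c. c \<in> carrier_vec r}"
    using V unfolding r_def is_lattice_basis_def by auto
  have "\<forall>k. k < n \<longrightarrow> (\<exists>a. a \<in> carrier_vec r \<and> col X k = V *\<^sub>v a)"
  proof (intro allI impI)
    fix k assume k: "k < n"
    have "col X k = X *\<^sub>v unit_vec n k" using col_as_mult[OF Xc k] .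
    also have "\<dots> \<in> M" by (rule XM) simp
    finally show "\<exists>a. a \<in> carrier_vec r \<and> col X k = V *\<^sub>v a" unfolding VM by blast
  qed
  then obtain f where f: "\<And>k. k < n \<Longrightarrow> f k \<in> carrier_vec r \<and> col X k = V *\<^sub>v f k"
    by metis
  define A where "A = mat r n (\<lambda>(i,k). f k $ i)"
  have Ac: "A \<in> carrier_mat r n" unfolding A_def by simp
  have colA: "\<And>k. k < n \<Longrightarrow> col A k = f k"
  proof -
    fix k assume k: "k < n"
    have fk: "f k \<in> carrier_vec r" using f[OF k] by blast
    then have "dim_vec (f k) = r" by simp
    then show "col A k = f k" unfolding A_def using k by (auto intro!: eq_vecI)
  qed
  have VA: "V * A = X"
  proof (rule eq_matI)
    fix i k assume i: "i < dim_row X" and k: "k < dim_col X"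
    have "(V * A) $$ (i,k) = row V i \<bullet> col A k" using Vc Ac i k Xc by simp
    also have "\<dots> = (V *\<^sub>v f k) $ i" using colA k Xc i Vc by simp
    also have "\<dots> = col X k $ i" using f k Xc by simp
    also have "\<dots> = X $$ (i,k)" using i k by simp
    finally show "(V * A) $$ (i,k) = X $$ (i,k)" .
  qed (use Vc Ac Xc in auto)
  have colV: "\<And>j. j < r \<Longrightarrow> col V j \<in> M"
  proof -
    fix j assume j: "j < r"
    have "col V j = V *\<^sub>v unit_vec r j" by (rule col_as_mult[OF Vc j])
    then show "col V j \<in> M" unfolding VM by auto
  qed
  have XV: "X * V = N \<cdot>\<^sub>m V"
  proof (rule eq_matI)
    fix i j assume i: "i < dim_row (N \<cdot>\<^sub>m V)" and j: "j < dim_col (N \<cdot>\<^sub>m V)"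
    have "(X * V) $$ (i,j) = (X *\<^sub>v col V j) $ i" using i j Xc Vc by simp
    also have "\<dots> = (N \<cdot>\<^sub>v col V j) $ i" using XN[OF colV] j Vc by simp
    also have "\<dots> = (N \<cdot>\<^sub>m V) $$ (i,j)" using i j Vc by simp
    finally show "(X * V) $$ (i,j) = (N \<cdot>\<^sub>m V) $$ (i,j)" .
  qed (use Vc Xc in auto)
  have AVc: "A * V \<in> carrier_mat r r" using Ac Vc by simp
  have Nc: "N \<cdot>\<^sub>m 1\<^sub>m r \<in> carrier_mat r r" by simp
  have VAV: "V * (A * V) = V * (N \<cdot>\<^sub>m 1\<^sub>m r)"
  proof -
    have "V * (A * V) = (V * A) * V" using Vc Ac by simp
    also have "\<dots> = N \<cdot>\<^sub>m V" using VA XV by simp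
    also have "\<dots> = V * (N \<cdot>\<^sub>m 1\<^sub>m r)" using Vc by (subst mult_smult_distrib[OF Vc]) auto
    finally show ?thesis .
  qed
  have AV: "A * V = N \<cdot>\<^sub>m 1\<^sub>m r"
  proof (rule mat_col_eqI)
    fix j assume "j < dim_col (N \<cdot>\<^sub>m 1\<^sub>m r)"
    then have j: "j < r" by simp
    let ?c1 = "col (A * V) j" and ?c2 = "col (N \<cdot>\<^sub>m 1\<^sub>m r :: int mat) j"
    have c1: "?c1 \<in> carrier_vec r" by (rule carrier_vecI) (use AVc in auto)
    have c2: "?c2 \<in> carrier_vec r" by (rule carrier_vecI) auto
    have "V *\<^sub>v ?c1 = col (V * (A * V)) j" using Vc AVc j by (intro col_mult2[symmetric])
    also have "\<dots> = col (V * (N \<cdot>\<^sub>m 1\<^sub>m r)) j" using VAV by simp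
    also have "\<dots> = V *\<^sub>v ?c2" using Vc Nc j by (intro col_mult2) auto
    finally have e: "V *\<^sub>v ?c1 = V *\<^sub>v ?c2" .
    have "V *\<^sub>v (?c1 - ?c2) = V *\<^sub>v ?c1 - V *\<^sub>v ?c2"
      by (rule mult_minus_distrib_mat_vec[OF Vc c1 c2])
    also have "\<dots> = 0\<^sub>v n" unfolding e by (rule minus_cancel_vec) (use Vc c2 in simp)
    finally have "?c1 - ?c2 = 0\<^sub>v r" using Vinj c1 c2 by simp
    then show "?c1 = ?c2" using c1 c2 by (metis vec_eq_iff index_minus_vec(1) index_zero_vec(1) eq_iff_diff_eq_0 carrier_vecD)
  qed (use AVc in auto)
  define M0 where "M0 = transpose_mat V * B * V"
  have M0c: "M0 \<in> carrier_mat r r" unfolding M0_def using Vc Bc by simp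
  have VTc: "transpose_mat V \<in> carrier_mat r n" using Vc by simp
  have ATc: "transpose_mat A \<in> carrier_mat n r" using Ac by simp
  have E1: "B * (X * V) = N \<cdot>\<^sub>m (B * V)" unfolding XV by (rule mult_smult_distrib[OF Bc Vc])
  have "B * (X * V) = (B * X) * V" using Bc Xc Vc by simp
  also have "\<dots> = (transpose_mat (V * A) * B) * V" unfolding BX VA ..
  also have "\<dots> = ((transpose_mat A * transpose_mat V) * B) * V"
    using transpose_mult[OF Vc Ac] by simp
  also have "\<dots> = (transpose_mat A * (transpose_mat V * B)) * V"
    by (subst assoc_mult_mat[OF ATc VTc Bc]) simp
  also have "\<dots> = transpose_mat A * M0" unfolding M0_def
    by (rule assoc_mult_mat[OF ATc _ Vc]) (use VTc Bc in simp)
  finally have E2: "N \<cdot>\<^sub>m (B * V) = transpose_mat A * M0" using E1 by simp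
  define Ad where "Ad = adj_mat B"
  have Adc: "Ad \<in> carrier_mat n n" and AdB: "Ad * B = det B \<cdot>\<^sub>m 1\<^sub>m n"
    unfolding Ad_def using adj_mat[OF Bc] by auto
  have AAdc: "A * Ad \<in> carrier_mat r n" using Ac Adc by simp
  have "(A * Ad) * (N \<cdot>\<^sub>m (B * V)) = N \<cdot>\<^sub>m ((A * Ad) * (B * V))"
    by (rule mult_smult_distrib[OF AAdc mult_carrier_mat[OF Bc Vc]])
  also have "(A * Ad) * (B * V) = A * ((Ad * B) * V)"
    using assoc_mult_mat[OF Ac Adc mult_carrier_mat[OF Bc Vc]] assoc_mult_mat[OF Adc Bc Vc] by simp
  also have "\<dots> = A * (det B \<cdot>\<^sub>m V)" unfolding AdB using mult_smult_assoc_mat[OF one_carrier_mat Vc] Vc by simp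
  also have "\<dots> = det B \<cdot>\<^sub>m (N \<cdot>\<^sub>m 1\<^sub>m r)" unfolding AV[symmetric] by (rule mult_smult_distrib[OF Ac Vc])
  finally have L: "(A * Ad) * (N \<cdot>\<^sub>m (B * V)) = N \<cdot>\<^sub>m (det B \<cdot>\<^sub>m (N \<cdot>\<^sub>m 1\<^sub>m r))" .
  have R: "(A * Ad) * (N \<cdot>\<^sub>m (B * V)) = ((A * Ad) * transpose_mat A) * M0"
    unfolding E2 using AAdc ATc M0c by simp
  have "det (N \<cdot>\<^sub>m (det B \<cdot>\<^sub>m (N \<cdot>\<^sub>m 1\<^sub>m r))) = N ^ r * (det B ^ r * N ^ r)" by simp
  moreover have "det (((A * Ad) * transpose_mat A) * M0) = det ((A * Ad) * transpose_mat A) * det M0"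
    by (rule det_mult[OF _ M0c]) (use AAdc ATc in simp)
  ultimately have "N ^ r * (det B ^ r * N ^ r) = det ((A * Ad) * transpose_mat A) * det M0"
    using L R by simp
  then show ?thesis unfolding M0_def r_def by simp
qed




locale lat_setup = group G for G :: "('g, 'b) monoid_scheme" (structure) +
  fixes n :: nat and B :: "int mat" and \<rho> :: "'g \<Rightarrow> int mat"
  assumes fin: "finite (carrier G)"
  and Bc: "B \<in> carrier_mat n n" and Bsym: "transpose_mat B = B" and detB: "det B \<noteq> 0"
  and rc: "\<And>g. g \<in> carrier G \<Longrightarrow> \<rho> g \<in> carrier_mat n n"
  and hom: "\<And>g h. g \<in> carrier G \<Longrightarrow> h \<in> carrier G \<Longrightarrow> \<rho> (g \<otimes> h) = \<rho> g * \<rho> h"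
  and one: "\<rho> \<one> = 1\<^sub>m n"
  and iso: "\<And>g. g \<in> carrier G \<Longrightarrow> transpose_mat (\<rho> g) * B * \<rho> g = B"
begin

definition S :: "int mat" where "S = mat n n (\<lambda>(i,j). \<Sum>g\<in>carrier G. \<rho> g $$ (i,j))"

lemma Sc: "S \<in> carrier_mat n n" unfolding S_def by simp

lemma reindex_mult: "h \<in> carrier G \<Longrightarrow> (\<Sum>g\<in>carrier G. f (h \<otimes> g)) = (\<Sum>g\<in>carrier G. (f g :: int))"
proof -
  assume h: "h \<in> carrier G"
  have "(\<Sum>g\<in>carrier G. f g) = (\<Sum>g\<in>(\<lambda>x. h \<otimes> x) ` carrier G. f g)" using surj_const_mult[OF h] by simp
  also have "\<dots> = (\<Sum>g\<in>carrier G. f (h \<otimes> g))" by (subst sum.reindex[OF inj_on_cmult[OF h]]) simp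
  finally show ?thesis by simp
qed

lemma reindex_inv: "(\<Sum>g\<in>carrier G. f (inv g)) = (\<Sum>g\<in>carrier G. (f g :: int))"
  by (rule sum.reindex_bij_witness[of _ "\<lambda>g. inv g" "\<lambda>g. inv g"]) auto

lemma mult_S_left:
  assumes X: "X \<in> carrier_mat a n"
  shows "X * S = mat a n (\<lambda>(i,j). \<Sum>g\<in>carrier G. (X * \<rho> g) $$ (i,j))"
proof (rule eq_matI)
  fix i j assume i: "i < dim_row (mat a n (\<lambda>(i,j). \<Sum>g\<in>carrier G. (X * \<rho> g) $$ (i,j)))"
    and j: "j < dim_col (mat a n (\<lambda>(i,j). \<Sum>g\<in>carrier G. (X * \<rho> g) $$ (i,j)))"
  have "(X * S) $$ (i,j) = (\<Sum>k\<in>{0..<n}. X $$ (i,k) * (\<Sum>g\<in>carrier G. \<rho> g $$ (k,j)))"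
    using X i j by (simp add: scalar_prod_def S_def)
  also have "\<dots> = (\<Sum>g\<in>carrier G. \<Sum>k\<in>{0..<n}. X $$ (i,k) * \<rho> g $$ (k,j))"
    by (simp add: sum_distrib_left) (rule sum.swap)
  also have "\<dots> = (\<Sum>g\<in>carrier G. (X * \<rho> g) $$ (i,j))"
  proof (intro sum.cong refl)
    fix g assume "g \<in> carrier G"
    then have "\<rho> g \<in> carrier_mat n n" by (rule rc)
    then show "(\<Sum>k\<in>{0..<n}. X $$ (i,k) * \<rho> g $$ (k,j)) = (X * \<rho> g) $$ (i,j)"
      using X i j by (simp add: scalar_prod_def)
  qed
  finally show "(X * S) $$ (i,j) = mat a n (\<lambda>(i,j). \<Sum>g\<in>carrier G. (X * \<rho> g) $$ (i,j)) $$ (i,j)"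
    using i j by simp
qed (use X Sc in auto)

lemma mult_ST_right:
  assumes Y: "Y \<in> carrier_mat n b"
  shows "transpose_mat S * Y = mat n b (\<lambda>(i,j). \<Sum>g\<in>carrier G. (transpose_mat (\<rho> g) * Y) $$ (i,j))"
proof (rule eq_matI)
  fix i j assume i: "i < dim_row (mat n b (\<lambda>(i,j). \<Sum>g\<in>carrier G. (transpose_mat (\<rho> g) * Y) $$ (i,j)))"
    and j: "j < dim_col (mat n b (\<lambda>(i,j). \<Sum>g\<in>carrier G. (transpose_mat (\<rho> g) * Y) $$ (i,j)))"
  have "(transpose_mat S * Y) $$ (i,j) = (\<Sum>k\<in>{0..<n}. (\<Sum>g\<in>carrier G. \<rho> g $$ (k,i)) * Y $$ (k,j))"
    using Y i j by (simp add: scalar_prod_def S_def)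
  also have "\<dots> = (\<Sum>g\<in>carrier G. \<Sum>k\<in>{0..<n}. \<rho> g $$ (k,i) * Y $$ (k,j))"
    by (simp add: sum_distrib_right) (rule sum.swap)
  also have "\<dots> = (\<Sum>g\<in>carrier G. (transpose_mat (\<rho> g) * Y) $$ (i,j))"
  proof (intro sum.cong refl)
    fix g assume "g \<in> carrier G"
    then have "\<rho> g \<in> carrier_mat n n" by (rule rc)
    then show "(\<Sum>k\<in>{0..<n}. \<rho> g $$ (k,i) * Y $$ (k,j)) = (transpose_mat (\<rho> g) * Y) $$ (i,j)"
      using Y i j by (simp add: scalar_prod_def)
  qed
  finally show "(transpose_mat S * Y) $$ (i,j) = mat n b (\<lambda>(i,j). \<Sum>g\<in>carrier G. (transpose_mat (\<rho> g) * Y) $$ (i,j)) $$ (i,j)"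
    using i j by simp
qed (use Y Sc in auto)

lemma S_mult_vec:
  assumes x: "x \<in> carrier_vec n"
  shows "S *\<^sub>v x = vec n (\<lambda>i. \<Sum>g\<in>carrier G. (\<rho> g *\<^sub>v x) $ i)"
proof (rule eq_vecI)
  fix i assume i: "i < dim_vec (vec n (\<lambda>i. \<Sum>g\<in>carrier G. (\<rho> g *\<^sub>v x) $ i))"
  have "(S *\<^sub>v x) $ i = (\<Sum>k\<in>{0..<n}. (\<Sum>g\<in>carrier G. \<rho> g $$ (i,k)) * x $ k)"
    using x i by (simp add: scalar_prod_def S_def)
  also have "\<dots> = (\<Sum>g\<in>carrier G. \<Sum>k\<in>{0..<n}. \<rho> g $$ (i,k) * x $ k)"
    by (simp add: sum_distrib_right) (rule sum.swap)
  also have "\<dots> = (\<Sum>g\<in>carrier G. (\<rho> g *\<^sub>v x) $ i)"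
  proof (intro sum.cong refl)
    fix g assume "g \<in> carrier G"
    then have "\<rho> g \<in> carrier_mat n n" by (rule rc)
    then show "(\<Sum>k\<in>{0..<n}. \<rho> g $$ (i,k) * x $ k) = (\<rho> g *\<^sub>v x) $ i"
      using x i by (simp add: scalar_prod_def)
  qed
  finally show "(S *\<^sub>v x) $ i = vec n (\<lambda>i. \<Sum>g\<in>carrier G. (\<rho> g *\<^sub>v x) $ i) $ i"
    using i by simp
qed (use x Sc in auto)

lemma rho_S: assumes h: "h \<in> carrier G" shows "\<rho> h * S = S"
proof -
  have "\<rho> h * S = mat n n (\<lambda>(i,j). \<Sum>g\<in>carrier G. (\<rho> h * \<rho> g) $$ (i,j))"
    by (rule mult_S_left[OF rc[OF h]])
  also have "\<dots> = mat n n (\<lambda>(i,j). \<Sum>g\<in>carrier G. \<rho> (h \<otimes> g) $$ (i,j))"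
    using h by (intro cong_mat refl) (auto intro!: sum.cong simp: hom)
  also have "\<dots> = S" unfolding S_def
  proof (intro cong_mat refl)
    fix i j
    show "(case (i,j) of (i,j) \<Rightarrow> \<Sum>g\<in>carrier G. \<rho> (h \<otimes> g) $$ (i,j)) = (case (i,j) of (i,j) \<Rightarrow> \<Sum>g\<in>carrier G. \<rho> g $$ (i,j))"
      using reindex_mult[OF h, of "\<lambda>g. \<rho> g $$ (i,j)"] by simp
  qed
  finally show ?thesis .
qed

lemma rhoT_B: assumes g: "g \<in> carrier G" shows "transpose_mat (\<rho> g) * B = B * \<rho> (inv g)"
proof -
  have rg: "\<rho> g \<in> carrier_mat n n" and rig: "\<rho> (inv g) \<in> carrier_mat n n" using rc g by auto
  have rgT: "transpose_mat (\<rho> g) \<in> carrier_mat n n" using rg by simp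
  have "transpose_mat (\<rho> g) * B = (transpose_mat (\<rho> g) * B) * (\<rho> g * \<rho> (inv g))"
    using g rgT Bc by (simp add: hom[symmetric] one)
  also have "\<dots> = (transpose_mat (\<rho> g) * B * \<rho> g) * \<rho> (inv g)"
    using rgT Bc rg rig by (simp add: assoc_mult_mat[of _ n n _ n _ n])
  also have "\<dots> = B * \<rho> (inv g)" using iso[OF g] by simp
  finally show ?thesis .
qed

lemma BS: "B * S = transpose_mat S * B"
proof -
  have "transpose_mat S * B = mat n n (\<lambda>(i,j). \<Sum>g\<in>carrier G. (transpose_mat (\<rho> g) * B) $$ (i,j))"
    by (rule mult_ST_right[OF Bc])
  also have "\<dots> = mat n n (\<lambda>(i,j). \<Sum>g\<in>carrier G. (B * \<rho> (inv g)) $$ (i,j))"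
    by (intro cong_mat refl) (auto intro!: sum.cong simp: rhoT_B)
  also have "\<dots> = mat n n (\<lambda>(i,j). \<Sum>g\<in>carrier G. (B * \<rho> g) $$ (i,j))"
  proof (intro cong_mat refl)
    fix i j
    show "(case (i,j) of (i,j) \<Rightarrow> \<Sum>g\<in>carrier G. (B * \<rho> (inv g)) $$ (i,j)) = (case (i,j) of (i,j) \<Rightarrow> \<Sum>g\<in>carrier G. (B * \<rho> g) $$ (i,j))"
      using reindex_inv[of "\<lambda>g. (B * \<rho> g) $$ (i,j)"] by simp
  qed
  also have "\<dots> = B * S" by (rule mult_S_left[OF Bc, symmetric])
  finally show ?thesis by simp
qed

end



context lat_setup begin

abbreviation "LI \<equiv> invariant_sublattice n G \<rho>"
abbreviation "LC \<equiv> coinvariant_sublattice B G \<rho>"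
abbreviation "NN \<equiv> int (card (carrier G))"

lemma LC_def': "LC = {v \<in> carrier_vec n. \<forall>w \<in> LI. v \<bullet> (B *\<^sub>v w) = 0}"
  unfolding coinvariant_sublattice_def orth_complement_def using Bc by simp

lemma S_in_LI: assumes x: "x \<in> carrier_vec n" shows "S *\<^sub>v x \<in> LI"
  unfolding invariant_sublattice_def
proof (intro CollectI conjI ballI)
  show "S *\<^sub>v x \<in> carrier_vec n" using Sc x by simp
  fix h assume h: "h \<in> carrier G"
  have "\<rho> h *\<^sub>v (S *\<^sub>v x) = (\<rho> h * S) *\<^sub>v x" using rc[OF h] Sc x by simp
  then show "\<rho> h *\<^sub>v (S *\<^sub>v x) = S *\<^sub>v x" using rho_S[OF h] by simp
qed

lemma S_on_LI: assumes v: "v \<in> LI" shows "S *\<^sub>v v = NN \<cdot>\<^sub>v v"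
proof -
  have vc: "v \<in> carrier_vec n" and fix_: "\<And>g. g \<in> carrier G \<Longrightarrow> \<rho> g *\<^sub>v v = v"
    using v unfolding invariant_sublattice_def by auto
  have "S *\<^sub>v v = vec n (\<lambda>i. \<Sum>g\<in>carrier G. (\<rho> g *\<^sub>v v) $ i)" by (rule S_mult_vec[OF vc])
  also have "\<dots> = vec n (\<lambda>i. \<Sum>g\<in>carrier G. v $ i)"
    by (intro eq_vecI) (auto simp: fix_)
  also have "\<dots> = NN \<cdot>\<^sub>v v" using vc by (intro eq_vecI) auto
  finally show ?thesis .
qed

lemma form_sym: assumes x: "x \<in> carrier_vec n" and y: "y \<in> carrier_vec n"
  shows "x \<bullet> (B *\<^sub>v y) = y \<bullet> (B *\<^sub>v x)"
proof -
  have "x \<bullet> (B *\<^sub>v y) = (transpose_mat B *\<^sub>v x) \<bullet> y"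
    by (rule transpose_vec_mult_scalar[OF Bc y x, symmetric])
  also have "\<dots> = y \<bullet> (B *\<^sub>v x)" unfolding Bsym using Bc x y by (intro comm_scalar_prod[of _ n]) auto
  finally show ?thesis .
qed

lemma B_inj: assumes y: "y \<in> carrier_vec n" and z: "B *\<^sub>v y = 0\<^sub>v n" shows "y = 0\<^sub>v n"
proof -
  have Ad: "adj_mat B \<in> carrier_mat n n" "adj_mat B * B = det B \<cdot>\<^sub>m 1\<^sub>m n" using adj_mat[OF Bc] by auto
  have "(adj_mat B * B) *\<^sub>v y = adj_mat B *\<^sub>v (B *\<^sub>v y)" by (rule assoc_mult_mat_vec[OF Ad(1) Bc y])
  also have "\<dots> = 0\<^sub>v n" unfolding z using Ad by (intro eq_vecI) (auto simp: scalar_prod_def)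
  finally have "(det B \<cdot>\<^sub>m 1\<^sub>m n) *\<^sub>v y = 0\<^sub>v n" using Ad by simp
  then have "det B \<cdot>\<^sub>v y = 0\<^sub>v n" using smult_mat_vec_int[OF one_carrier_mat y] y by simp
  then show ?thesis using detB y by (intro eq_vecI) (auto simp: vec_eq_iff)
qed

lemma S_on_LC: assumes w: "w \<in> LC" shows "S *\<^sub>v w = 0\<^sub>v n"
proof -
  have wc: "w \<in> carrier_vec n" and orth: "\<And>u. u \<in> LI \<Longrightarrow> w \<bullet> (B *\<^sub>v u) = 0"
    using w unfolding LC_def' by auto
  have "B *\<^sub>v (S *\<^sub>v w) = (B * S) *\<^sub>v w" using Bc Sc wc by simp
  also have "\<dots> = (transpose_mat S * B) *\<^sub>v w" unfolding BS ..
  also have "\<dots> = transpose_mat S *\<^sub>v (B *\<^sub>v w)" using Bc Sc wc by simp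
  also have "\<dots> = 0\<^sub>v n"
  proof (rule eq_vecI)
    fix k assume "k < dim_vec (0\<^sub>v n :: int vec)"
    then have k: "k < n" by simp
    have "(transpose_mat S *\<^sub>v (B *\<^sub>v w)) $ k = col S k \<bullet> (B *\<^sub>v w)" using Sc k by simp
    also have "\<dots> = (S *\<^sub>v unit_vec n k) \<bullet> (B *\<^sub>v w)" using col_as_mult[OF Sc k] by simp
    also have "\<dots> = w \<bullet> (B *\<^sub>v (S *\<^sub>v unit_vec n k))" using Sc wc by (intro form_sym) auto
    also have "\<dots> = 0" using orth S_in_LI by simp
    finally show "(transpose_mat S *\<^sub>v (B *\<^sub>v w)) $ k = 0\<^sub>v n $ k" using k by simp
  qed (use Sc in simp)
  finally show ?thesis using B_inj Sc wc by simp
qed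

definition T :: "int mat" where "T = NN \<cdot>\<^sub>m 1\<^sub>m n - S"

lemma Tc: "T \<in> carrier_mat n n" unfolding T_def using Sc by (intro minus_carrier_mat) auto

lemma T_vec: assumes x: "x \<in> carrier_vec n" shows "T *\<^sub>v x = NN \<cdot>\<^sub>v x - S *\<^sub>v x"
  unfolding T_def using x Sc
  by (simp add: minus_mult_distrib_mat_vec[of _ n n] smult_mat_vec_int[OF one_carrier_mat x])

lemma BT: "B * T = transpose_mat T * B"
proof -
  have tN: "transpose_mat (NN \<cdot>\<^sub>m 1\<^sub>m n) = NN \<cdot>\<^sub>m 1\<^sub>m n" by (intro eq_matI) auto
  have "B * T = B * (NN \<cdot>\<^sub>m 1\<^sub>m n) - B * S" unfolding T_def
    by (rule mult_minus_distrib_mat[OF Bc _ Sc]) simp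
  also have "B * (NN \<cdot>\<^sub>m 1\<^sub>m n) = NN \<cdot>\<^sub>m B" using mult_smult_distrib[OF Bc one_carrier_mat] Bc by simp
  finally have 1: "B * T = NN \<cdot>\<^sub>m B - transpose_mat S * B" unfolding BS .
  have "transpose_mat T = NN \<cdot>\<^sub>m 1\<^sub>m n - transpose_mat S" unfolding T_def
    using transpose_minus[of "NN \<cdot>\<^sub>m 1\<^sub>m n" n n S] Sc tN by simp
  then have "transpose_mat T * B = (NN \<cdot>\<^sub>m 1\<^sub>m n) * B - transpose_mat S * B"
    using minus_mult_distrib_mat[of "NN \<cdot>\<^sub>m 1\<^sub>m n" n n "transpose_mat S" B n] Sc Bc by simp
  also have "(NN \<cdot>\<^sub>m 1\<^sub>m n) * B = NN \<cdot>\<^sub>m B" using mult_smult_assoc_mat[OF one_carrier_mat Bc] Bc by simp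
  finally show ?thesis using 1 by simp
qed

lemma T_in_LC: assumes x: "x \<in> carrier_vec n" shows "T *\<^sub>v x \<in> LC"
  unfolding LC_def'
proof (intro CollectI conjI ballI)
  show "T *\<^sub>v x \<in> carrier_vec n" using Tc x by simp
  fix w assume w: "w \<in> LI"
  have wc: "w \<in> carrier_vec n" using w unfolding invariant_sublattice_def by auto
  have Tw: "T *\<^sub>v w = 0\<^sub>v n" using T_vec[OF wc] S_on_LI[OF w] wc by simp
  have "(T *\<^sub>v x) \<bullet> (B *\<^sub>v w) = (B *\<^sub>v w) \<bullet> (T *\<^sub>v x)"
    using Tc Bc x wc by (intro comm_scalar_prod[of _ n]) auto
  also have "\<dots> = (transpose_mat T *\<^sub>v (B *\<^sub>v w)) \<bullet> x"
    by (rule transpose_vec_mult_scalar[OF Tc x, symmetric]) (use Bc wc in simp)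
  also have "transpose_mat T *\<^sub>v (B *\<^sub>v w) = (transpose_mat T * B) *\<^sub>v w" using Tc Bc wc by simp
  also have "\<dots> = B *\<^sub>v (T *\<^sub>v w)" unfolding BT[symmetric] using Tc Bc wc by simp
  also have "\<dots> = 0\<^sub>v n" unfolding Tw using Bc by (intro eq_vecI) (auto simp: scalar_prod_def)
  finally show "(T *\<^sub>v x) \<bullet> (B *\<^sub>v w) = 0" using x by simp
qed

lemma T_on_LC: assumes w: "w \<in> LC" shows "T *\<^sub>v w = NN \<cdot>\<^sub>v w"
proof -
  have wc: "w \<in> carrier_vec n" using w unfolding LC_def' by auto
  show ?thesis using T_vec[OF wc] S_on_LC[OF w] wc by simp
qed

end



lemma mat_vec_zero_int: "(A :: int mat) \<in> carrier_mat nr nc \<Longrightarrow> A *\<^sub>v 0\<^sub>v nc = 0\<^sub>v nr"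
  by (intro eq_vecI) (auto simp: scalar_prod_def)

context lat_setup begin

lemma zLI: "zsub n LI"
  unfolding zsub_def invariant_sublattice_def
proof (intro conjI ballI allI subsetI)
  fix x assume "x \<in> {v \<in> carrier_vec n. \<forall>g\<in>carrier G. \<rho> g *\<^sub>v v = v}" then show "x \<in> carrier_vec n" by simp
next
  show "0\<^sub>v n \<in> {v \<in> carrier_vec n. \<forall>g\<in>carrier G. \<rho> g *\<^sub>v v = v}"
    using rc by (auto simp: mat_vec_zero_int)
next
  fix x y assume x: "x \<in> {v \<in> carrier_vec n. \<forall>g\<in>carrier G. \<rho> g *\<^sub>v v = v}"
    and y: "y \<in> {v \<in> carrier_vec n. \<forall>g\<in>carrier G. \<rho> g *\<^sub>v v = v}"
  show "x + y \<in> {v \<in> carrier_vec n. \<forall>g\<in>carrier G. \<rho> g *\<^sub>v v = v}"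
    using x y by (auto simp: mult_add_distrib_mat_vec[OF rc])
next
  fix x c assume x: "x \<in> {v \<in> carrier_vec n. \<forall>g\<in>carrier G. \<rho> g *\<^sub>v v = v}"
  show "c \<cdot>\<^sub>v x \<in> {v \<in> carrier_vec n. \<forall>g\<in>carrier G. \<rho> g *\<^sub>v v = v}"
    using x by (auto simp: mat_vec_smult_int[OF rc])
qed

lemma LIc: "v \<in> LI \<Longrightarrow> v \<in> carrier_vec n" unfolding invariant_sublattice_def by auto

lemma zLC: "zsub n LC"
  unfolding zsub_def LC_def'
proof (intro conjI ballI allI subsetI)
  fix x assume "x \<in> {v \<in> carrier_vec n. \<forall>w\<in>LI. v \<bullet> (B *\<^sub>v w) = 0}" then show "x \<in> carrier_vec n" by simp
next
  show "0\<^sub>v n \<in> {v \<in> carrier_vec n. \<forall>w\<in>LI. v \<bullet> (B *\<^sub>v w) = 0}"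
    using Bc LIc by auto
next
  fix x y assume x: "x \<in> {v \<in> carrier_vec n. \<forall>w\<in>LI. v \<bullet> (B *\<^sub>v w) = 0}"
    and y: "y \<in> {v \<in> carrier_vec n. \<forall>w\<in>LI. v \<bullet> (B *\<^sub>v w) = 0}"
  show "x + y \<in> {v \<in> carrier_vec n. \<forall>w\<in>LI. v \<bullet> (B *\<^sub>v w) = 0}"
    using x y Bc LIc by (auto simp: add_scalar_prod_distrib[of _ n])
next
  fix x c assume x: "x \<in> {v \<in> carrier_vec n. \<forall>w\<in>LI. v \<bullet> (B *\<^sub>v w) = 0}"
  show "c \<cdot>\<^sub>v x \<in> {v \<in> carrier_vec n. \<forall>w\<in>LI. v \<bullet> (B *\<^sub>v w) = 0}"
    using x Bc LIc by auto
qed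

lemma det_dvd:
  assumes zM: "zsub n M" and X: "X \<in> carrier_mat n n"
    and XM: "\<And>x. x \<in> carrier_vec n \<Longrightarrow> X *\<^sub>v x \<in> M"
    and XN: "\<And>v. v \<in> M \<Longrightarrow> X *\<^sub>v v = NN \<cdot>\<^sub>v v"
    and BX: "B * X = transpose_mat X * B"
  shows "\<exists>r. lattice_det B M dvd NN ^ r * (det B ^ r * NN ^ r)"
proof -
  have dB: "dim_row B = n" using Bc by simp
  define V where "V = (SOME V. is_lattice_basis (dim_row B) M V)"
  have V: "is_lattice_basis n M V" unfolding V_def dB using basis_exists[OF zM] by (rule someI_ex)
  have "lattice_det B M = det (transpose_mat V * B * V)" unfolding lattice_det_def V_def Let_def ..
  then show ?thesis using key_det[OF Bc V X XM XN BX] by auto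
qed

end

lemma prime_not_dvd:
  fixes p N d :: int
  assumes "prime p" "\<not> p dvd N" "\<not> p dvd d" "x dvd N ^ r * (d ^ r * N ^ r)"
  shows "\<not> p dvd x"
proof
  assume "p dvd x"
  then have "p dvd N ^ r * (d ^ r * N ^ r)" using assms(4) by (rule dvd_trans)
  then show False using assms(1-3) by (metis prime_dvd_mult_iff prime_dvd_power)
qed

theorem lemma8p1:
  fixes p :: int and n :: nat and B :: "int mat"
    and G :: "('g, 'b) monoid_scheme" and \<rho> :: "'g \<Rightarrow> int mat"
  assumes "prime p"
    and "group G" and "finite (carrier G)" and "\<not> p dvd int (card (carrier G))"
    and "B \<in> carrier_mat n n" and "transpose_mat B = B" and "det B \<noteq> 0"
    and "\<And>g. g \<in> carrier G \<Longrightarrow> \<rho> g \<in> carrier_mat n n"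
    and "\<And>g h. g \<in> carrier G \<Longrightarrow> h \<in> carrier G \<Longrightarrow> \<rho> (g \<otimes>\<^bsub>G\<^esub> h) = \<rho> g * \<rho> h"
    and "\<rho> \<one>\<^bsub>G\<^esub> = 1\<^sub>m n"
    and "\<And>g. g \<in> carrier G \<Longrightarrow> transpose_mat (\<rho> g) * B * \<rho> g = B"
    and "\<not> p dvd det B"
  shows "\<not> p dvd lattice_det B (invariant_sublattice n G \<rho>) * lattice_det B (coinvariant_sublattice B G \<rho>)"
proof -
  interpret L: lat_setup G n B \<rho>
    by (rule lat_setup.intro[OF assms(2)], unfold_locales) (use assms in auto)
  obtain r1 where 1: "lattice_det B (invariant_sublattice n G \<rho>) dvd
      int (card (carrier G)) ^ r1 * (det B ^ r1 * int (card (carrier G)) ^ r1)"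
    using L.det_dvd[OF L.zLI L.Sc L.S_in_LI L.S_on_LI L.BS] by blast
  obtain r2 where 2: "lattice_det B (coinvariant_sublattice B G \<rho>) dvd
      int (card (carrier G)) ^ r2 * (det B ^ r2 * int (card (carrier G)) ^ r2)"
    using L.det_dvd[OF L.zLC L.Tc L.T_in_LC L.T_on_LC L.BT] by blast
  have "\<not> p dvd lattice_det B (invariant_sublattice n G \<rho>)"
    by (rule prime_not_dvd[OF assms(1) assms(4) assms(12) 1])
  moreover have "\<not> p dvd lattice_det B (coinvariant_sublattice B G \<rho>)"
    by (rule prime_not_dvd[OF assms(1) assms(4) assms(12) 2])
  ultimately show ?thesis using assms(1) by (simp add: prime_dvd_mult_iff)
qed


end
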